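(* Let $\theta>0$. Then there are $\psi,\psi_1,\psi_2\in\mathrm{H}^\infty_0(S_\theta)$ with \[\sum_{n\in\mathbb{Z}}\psi_1(z-n)\,\psi_2(z-n)\,\psi(z-n)=1\qquad(z\in S_\theta).\]
   Context: $S_\theta=\{z\in\mathbb{C}:|\operatorname{Im}z|<\theta\}$. $\mathrm{H}^\infty_0(S_\theta)$ is the set of holomorphic functions $f$ on $S_\theta$ such that for every $\alpha>0$ there is $C$ with $|f(z)|\le C(1+|\operatorname{Re}z|)^{-\alpha}$ for all $z\in S_\theta$. *)

theory Defs
  imports "HOL-Analysis.Analysis"
begin

definition strip :: "real \<Rightarrow> complex set" where
  "strip \<theta> = {z. \<bar>Im z\<bar> < \<theta>}"

definition Hinf0 :: "real \<Rightarrow> (complex \<Rightarrow> complex) set" where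
  "Hinf0 \<theta> = {f. f holomorphic_on strip \<theta> \<and>
     (\<forall>\<alpha>>0. \<exists>C. \<forall>z\<in>strip \<theta>. norm (f z) \<le> C * (1 + \<bar>Re z\<bar>) powr (- \<alpha>))}"

end

theory Submission
  imports Defs
begin


lemma exp_pow_le_fact:
  fixes v :: real assumes "0 \<le> v" shows "v ^ k \<le> fact k * exp v"
proof -
  have "(\<Sum>n\<in>{k}. inverse (fact n) * v ^ n) \<le> (\<Sum>n. inverse (fact n) * v ^ n)"
    using assms by (intro sum_le_suminf[OF summable_exp]) auto
  then have "inverse (fact k) * v ^ k \<le> exp v" by (simp add: exp_def field_simps)
  then show ?thesis by (simp add: field_simps)
qed

lemma exp_poly_decay:
  fixes p \<alpha> :: real assumes p: "p > 0" and a: "\<alpha> > 0"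
  shows "\<exists>C. \<forall>t\<ge>0. exp (- p * t) \<le> C * (1 + t) powr (- \<alpha>)"
proof -
  define k where "k = nat \<lceil>\<alpha>\<rceil>"
  have ak: "\<alpha> \<le> real k" unfolding k_def by linarith
  define C where "C = fact k * exp p / p ^ k"
  show ?thesis
  proof (intro exI allI impI)
    fix t :: real assume t: "t \<ge> 0"
    have "(1 + t) powr \<alpha> \<le> (1 + t) powr (real k)"
      using t ak by (intro powr_mono) auto
    also have "\<dots> = (1 + t) ^ k" using t by (simp add: powr_realpow)
    also have "\<dots> = (p * (1 + t)) ^ k / p ^ k" using p by (simp add: power_mult_distrib)
    also have "\<dots> \<le> fact k * exp (p * (1 + t)) / p ^ k"
      using p t by (intro divide_right_mono exp_pow_le_fact) auto
    also have "\<dots> = C * exp (p * t)" unfolding C_def by (simp add: distrib_left exp_add)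
    finally have "(1 + t) powr \<alpha> \<le> C * exp (p * t)" .
    then have "(1 + t) powr \<alpha> * exp (- p * t) \<le> C"
      by (simp add: exp_minus field_simps)
    then show "exp (- p * t) \<le> C * (1 + t) powr (- \<alpha>)"
      using t by (simp add: powr_minus field_simps)
  qed
qed

lemma Hinf0I:
  fixes f :: "complex \<Rightarrow> complex"
  assumes "f holomorphic_on strip \<theta>" "p > 0" "K \<ge> 0"
    "\<And>z. z \<in> strip \<theta> \<Longrightarrow> norm (f z) \<le> K * exp (- p * \<bar>Re z\<bar>)"
  shows "f \<in> Hinf0 \<theta>"
  unfolding Hinf0_def
proof (intro CollectI conjI allI impI assms(1))
  fix \<alpha> :: real assume "\<alpha> > 0"
  from exp_poly_decay[OF assms(2) this] obtain C where
    C: "\<And>t. t \<ge> 0 \<Longrightarrow> exp (- p * t) \<le> C * (1 + t) powr (- \<alpha>)" by blast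
  show "\<exists>C. \<forall>z\<in>strip \<theta>. norm (f z) \<le> C * (1 + \<bar>Re z\<bar>) powr (- \<alpha>)"
  proof (intro exI ballI)
    fix z assume z: "z \<in> strip \<theta>"
    have "norm (f z) \<le> K * exp (- p * \<bar>Re z\<bar>)" using assms(4) z .
    also have "\<dots> \<le> K * (C * (1 + \<bar>Re z\<bar>) powr (- \<alpha>))"
      using C[of "\<bar>Re z\<bar>"] assms(3) by (intro mult_left_mono) auto
    finally show "norm (f z) \<le> (K * C) * (1 + \<bar>Re z\<bar>) powr (- \<alpha>)" by simp
  qed
qed

lemma norm_one_plus:
  fixes v :: complex assumes "Re v \<ge> 0"
  shows "1 \<le> norm (1 + v)" "norm v \<le> norm (1 + v)"
proof -
  have "1 \<le> Re (1 + v)" using assms by simp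
  also have "\<dots> \<le> norm (1 + v)" by (rule complex_Re_le_cmod)
  finally show "1 \<le> norm (1 + v)" .
  have "(norm v)^2 \<le> (norm (1 + v))^2"
    using assms unfolding cmod_power2 by (simp add: power2_eq_square algebra_simps)
  then show "norm v \<le> norm (1 + v)" by (rule power2_le_imp_le) simp
qed

lemma Re_exp_nonneg:
  assumes "m \<ge> 0" "m * \<theta> \<le> pi / 2" "\<bar>Im z\<bar> < \<theta>"
  shows "Re (exp (complex_of_real m * z)) \<ge> 0"
proof -
  have "\<bar>m * Im z\<bar> \<le> m * \<theta>" using assms by (simp add: abs_mult mult_left_mono)
  then have "cos (m * Im z) \<ge> 0" using assms by (intro cos_ge_zero) auto
  then show ?thesis by (simp add: Re_exp)
qed

lemma exp_bounds:
  assumes "m \<ge> 0" "m * \<theta> \<le> pi / 2" "\<bar>Im z\<bar> < \<theta>"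
  shows "1 \<le> norm (1 + exp (complex_of_real m * z))"
        "exp (m * Re z) \<le> norm (1 + exp (complex_of_real m * z))"
        "norm (exp (complex_of_real m * z)) = exp (m * Re z)"
  using norm_one_plus[OF Re_exp_nonneg[OF assms]] by (auto simp: norm_exp_eq_Re)



definition cc :: "real \<Rightarrow> real" where "cc p = exp (-4*p)"
definition ee :: "real \<Rightarrow> complex \<Rightarrow> complex" where "ee p z = exp (of_real p * z)"
definition gg :: "real \<Rightarrow> complex \<Rightarrow> complex" where
  "gg p z = ee p z / (1 + ee p z ^ 2)"
definition FF :: "real \<Rightarrow> complex \<Rightarrow> complex" where
  "FF p z = ee p z ^ 4 / (1 + ee p z ^ 4)"
definition ff :: "real \<Rightarrow> complex \<Rightarrow> complex" where
  "ff p z = of_real (1 - cc p) * ee p z ^ 4 / ((1 + ee p z ^ 4) * (1 + of_real (cc p) * ee p z ^ 4))"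
definition hh :: "real \<Rightarrow> complex \<Rightarrow> complex" where
  "hh p z = of_real (1 - cc p) * ee p z ^ 2 * (1 + ee p z ^ 2)^2 /
     ((1 + ee p z ^ 4) * (1 + of_real (cc p) * ee p z ^ 4))"

lemma strip_Im: "z \<in> strip \<theta> \<Longrightarrow> \<bar>Im z\<bar> < \<theta>" by (simp add: strip_def)

lemma ee_shift: "ee p (z - 1) ^ 4 = of_real (cc p) * ee p z ^ 4"
proof -
  have "ee p (z - 1) ^ 4 = exp (of_nat 4 * (of_real p * (z - 1)))"
    unfolding ee_def by (rule exp_of_nat_mult[symmetric])
  also have "of_nat 4 * (of_real p * (z - 1)) = of_real (-4*p) + of_nat 4 * (of_real p * z)"
    by (simp add: algebra_simps)
  also have "exp \<dots> = exp (of_real (-4*p)) * exp (of_nat 4 * (of_real p * z))"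
    by (rule exp_add)
  also have "\<dots> = of_real (cc p) * ee p z ^ 4"
    unfolding ee_def cc_def exp_of_nat_mult exp_of_real by simp
  finally show ?thesis .
qed

lemma norm_ee: "norm (ee p z) = exp (p * Re z)"
  unfolding ee_def by (simp add: norm_exp_eq_Re)

lemma Re_ee_pow:
  assumes "p \<ge> 0" "real k * p * \<theta> \<le> pi / 2" "\<bar>Im z\<bar> < \<theta>"
  shows "Re (ee p z ^ k) \<ge> 0"
proof -
  have "ee p z ^ k = exp (of_nat k * (of_real p * z))"
    unfolding ee_def by (rule exp_of_nat_mult[symmetric])
  also have "of_nat k * (of_real p * z) = complex_of_real (real k * p) * z" by simp
  finally have e: "ee p z ^ k = exp (complex_of_real (real k * p) * z)" .
  show ?thesis unfolding e
    by (rule Re_exp_nonneg[of _ \<theta>]) (use assms in auto)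
qed

lemma cc_pos: "cc p > 0" by (simp add: cc_def)
lemma cc_le1: "p \<ge> 0 \<Longrightarrow> cc p \<le> 1" by (simp add: cc_def)

context
  fixes p \<theta> :: real
  assumes p: "p > 0" and pt: "4 * p * \<theta> \<le> pi / 2"
begin

lemma Re2: "\<bar>Im z\<bar> < \<theta> \<Longrightarrow> Re (ee p z ^ 2) \<ge> 0"
proof -
  assume a: "\<bar>Im z\<bar> < \<theta>"
  then have "\<theta> > 0" by linarith
  then have "p * \<theta> > 0" using p by simp
  then have "real 2 * p * \<theta> \<le> pi / 2" using pt by simp
  then show ?thesis using Re_ee_pow[of p 2 \<theta> z] p a by simp
qed

lemma Re4: "\<bar>Im z\<bar> < \<theta> \<Longrightarrow> Re (ee p z ^ 4) \<ge> 0"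
  using Re_ee_pow[of p 4 \<theta> z] p pt by simp

lemma Re4c: "\<bar>Im z\<bar> < \<theta> \<Longrightarrow> Re (of_real (cc p) * ee p z ^ 4) \<ge> 0"
  using Re4 cc_pos[of p] by simp

lemma nz: assumes "\<bar>Im z\<bar> < \<theta>"
  shows "1 + ee p z ^ 2 \<noteq> 0" "1 + ee p z ^ 4 \<noteq> 0" "1 + of_real (cc p) * ee p z ^ 4 \<noteq> 0"
  using norm_one_plus(1)[OF Re2[OF assms]] norm_one_plus(1)[OF Re4[OF assms]]
    norm_one_plus(1)[OF Re4c[OF assms]] by auto

lemma ee_nz: "ee p z \<noteq> 0" by (simp add: ee_def)

lemma alg1: fixes u a D k :: complex
  shows "a \<noteq> 0 \<Longrightarrow> D \<noteq> 0 \<Longrightarrow> u / a * (u / a) * (k * u^2 * a^2 / D) = k * u^4 / D"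
proof -
  assume "a \<noteq> 0" "D \<noteq> 0"
  have "u^4 = u^2 * u^2" by simp
  then show ?thesis using \<open>a \<noteq> 0\<close> \<open>D \<noteq> 0\<close> by (simp add: field_simps power2_eq_square)
qed

lemma alg2: fixes w c :: complex
  shows "1 + w \<noteq> 0 \<Longrightarrow> 1 + c * w \<noteq> 0 \<Longrightarrow> (1 - c) * w / ((1 + w) * (1 + c * w)) = w / (1 + w) - c * w / (1 + c * w)"
  by (simp add: field_simps)

lemma prod_eq: assumes "\<bar>Im z\<bar> < \<theta>" shows "gg p z * gg p z * hh p z = ff p z"
  unfolding gg_def hh_def ff_def
  by (rule alg1) (use nz[OF assms] in auto)

lemma tele: assumes "\<bar>Im z\<bar> < \<theta>" shows "ff p z = FF p z - FF p (z - 1)"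
  unfolding ff_def FF_def ee_shift of_real_diff of_real_1
  by (rule alg2) (use nz[OF assms] in auto)

lemma gg_bound: assumes "\<bar>Im z\<bar> < \<theta>" shows "norm (gg p z) \<le> exp (- p * \<bar>Re z\<bar>)"
proof -
  define r where "r = exp (p * Re z)"
  have r: "r > 0" unfolding r_def by simp
  have d1: "1 \<le> norm (1 + ee p z ^ 2)" by (rule norm_one_plus(1)[OF Re2[OF assms]])
  have d2: "r^2 \<le> norm (1 + ee p z ^ 2)"
    using norm_one_plus(2)[OF Re2[OF assms]] by (simp add: norm_power norm_ee r_def)
  have n: "norm (gg p z) = r / norm (1 + ee p z ^ 2)"
    unfolding gg_def by (simp add: norm_divide norm_ee r_def)
  show ?thesis
  proof (cases "Re z \<ge> 0")
    case True
    have "norm (gg p z) \<le> r / r^2"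
      unfolding n using d2 r by (intro divide_left_mono) (auto intro!: mult_pos_pos)
    also have "\<dots> = exp (- p * \<bar>Re z\<bar>)" using True r
      by (simp add: r_def power2_eq_square exp_minus field_simps)
    finally show ?thesis .
  next
    case False
    have "norm (gg p z) \<le> r / 1"
      unfolding n using d1 r by (intro divide_left_mono) auto
    then show ?thesis using False by (simp add: r_def)
  qed
qed

lemma hh_bound: assumes "\<bar>Im z\<bar> < \<theta>" shows "norm (hh p z) \<le> 4 / cc p * exp (- p * \<bar>Re z\<bar>)"
proof -
  define r where "r = exp (p * Re z)"
  define c where "c = cc p"
  have r: "r > 0" unfolding r_def by simp
  have c: "0 < c" "c \<le> 1" unfolding c_def using cc_pos cc_le1 p by auto
  define N4 where "N4 = norm (1 + ee p z ^ 4)"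
  define Nc where "Nc = norm (1 + of_real (cc p) * ee p z ^ 4)"
  have N4: "1 \<le> N4" "r^4 \<le> N4"
    using norm_one_plus[OF Re4[OF assms]] by (auto simp: N4_def norm_power norm_ee r_def)
  have Nc: "1 \<le> Nc" "c * r^4 \<le> Nc"
    using norm_one_plus[OF Re4c[OF assms]] c
    by (auto simp: Nc_def norm_mult norm_power norm_ee r_def c_def)
  have N2: "norm (1 + ee p z ^ 2) \<le> 1 + r^2"
    using norm_triangle_ineq[of 1 "ee p z ^ 2"] by (simp add: norm_power norm_ee r_def)
  have num: "norm (of_real (1 - cc p) * ee p z ^ 2 * (1 + ee p z ^ 2)^2) \<le> r^2 * (1 + r^2)^2"
  proof -
    have "norm (of_real (1 - cc p) * ee p z ^ 2 * (1 + ee p z ^ 2)^2)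
       = (1 - c) * r^2 * norm (1 + ee p z ^ 2)^2"
    proof -
      have nc: "cmod (1 - complex_of_real (cc p)) = 1 - c"
        using c unfolding c_def by (metis norm_of_real of_real_1 of_real_diff abs_of_nonneg diff_ge_0_iff_ge)
      show ?thesis using nc by (simp add: norm_mult norm_power norm_ee r_def)
    qed
    also have "\<dots> \<le> 1 * r^2 * (1 + r^2)^2"
      using c N2 r by (intro mult_mono power_mono) auto
    finally show ?thesis by simp
  qed
  have n: "norm (hh p z) = norm (of_real (1 - cc p) * ee p z ^ 2 * (1 + ee p z ^ 2)^2) / (N4 * Nc)"
    unfolding hh_def N4_def Nc_def by (simp add: norm_divide norm_mult)
  show ?thesis
  proof (cases "Re z \<ge> 0")
    case True
    have r1: "1 \<le> r" unfolding r_def using True p by simp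
    have "norm (hh p z) \<le> (r^2 * (1 + r^2)^2) / (r^4 * (c * r^4))"
      unfolding n using num N4 Nc r c by (intro frac_le mult_mono) auto
    also have "\<dots> \<le> (r^2 * (2 * r^2)^2) / (r^4 * (c * r^4))"
      using r1 r c by (intro divide_right_mono mult_left_mono power_mono) (auto simp: power_increasing)
    also have "\<dots> = 4 / c * (1 / r^2)" using r c by (simp add: field_simps eval_nat_numeral)
    also have "\<dots> \<le> 4 / c * (1 / r)"
      using r1 r c by (intro mult_left_mono divide_left_mono) (auto simp: power2_eq_square)
    also have "1 / r = exp (- p * \<bar>Re z\<bar>)" using True by (simp add: r_def exp_minus field_simps)
    finally show ?thesis by (simp add: c_def)
  next
    case False
    have r1: "r \<le> 1" unfolding r_def using False p by (simp add: mult_nonneg_nonpos)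
    have "norm (hh p z) \<le> (r^2 * (1 + r^2)^2) / (1 * 1)"
      unfolding n using num N4 Nc r c by (intro frac_le mult_mono) auto
    also have "\<dots> \<le> r * (2^2)"
    proof -
      have "r^2 \<le> r" using r r1 by (simp add: power2_eq_square mult_le_cancel_left1)
      moreover have "(1 + r^2)^2 \<le> 2^2" using r r1 by (intro power_mono) (auto simp: power_le_one)
      ultimately show ?thesis using r by (simp add: mult_mono)
    qed
    also have "\<dots> \<le> 4 / c * r" using c r by (simp add: field_simps)
    also have "r = exp (- p * \<bar>Re z\<bar>)" using False by (simp add: r_def)
    finally show ?thesis by (simp add: c_def)
  qed
qed

lemma gg_le1: assumes "\<bar>Im z\<bar> < \<theta>" shows "norm (gg p z) \<le> 1"
proof -
  have "- p * \<bar>Re z\<bar> \<le> 0" using p by simp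
  then have "exp (- p * \<bar>Re z\<bar>) \<le> 1" by simp
  then show ?thesis using gg_bound[OF assms] by linarith
qed

lemma ff_bound: assumes "\<bar>Im z\<bar> < \<theta>" shows "norm (ff p z) \<le> 4 / cc p * exp (- p * \<bar>Re z\<bar>)"
proof -
  have g: "norm (gg p z) \<le> 1" using gg_le1[OF assms] .
  have "norm (ff p z) = norm (gg p z) * norm (gg p z) * norm (hh p z)"
    using prod_eq[OF assms] by (metis norm_mult)
  also have "\<dots> \<le> norm (hh p z)"
  proof -
    have "norm (gg p z) * norm (gg p z) \<le> 1" using g by (simp add: mult_le_one)
    then show ?thesis by (simp add: mult_left_le_one_le)
  qed
  also have "\<dots> \<le> 4 / cc p * exp (- p * \<bar>Re z\<bar>)" using hh_bound[OF assms] .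
  finally show ?thesis .
qed

lemma FF_bound0: assumes "\<bar>Im z\<bar> < \<theta>" shows "norm (FF p z) \<le> exp (4 * p * Re z)"
proof -
  have "norm (FF p z) = exp (p * Re z) ^ 4 / norm (1 + ee p z ^ 4)"
    unfolding FF_def by (simp add: norm_divide norm_power norm_ee)
  also have "\<dots> \<le> exp (p * Re z) ^ 4 / 1"
    using norm_one_plus(1)[OF Re4[OF assms]] by (intro divide_left_mono) auto
  also have "\<dots> = exp (4 * p * Re z)" by (simp add: exp_of_nat_mult[symmetric] mult.assoc)
  finally show ?thesis .
qed

lemma FF_bound1: assumes "\<bar>Im z\<bar> < \<theta>" shows "norm (FF p z - 1) \<le> exp (- 4 * p * Re z)"
proof -
  have d: "1 + ee p z ^ 4 \<noteq> 0" using nz(2)[OF assms] .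
  have "FF p z - 1 = - 1 / (1 + ee p z ^ 4)" unfolding FF_def using d by (simp add: field_simps)
  then have "norm (FF p z - 1) = 1 / norm (1 + ee p z ^ 4)" by (simp add: norm_divide)
  also have "\<dots> \<le> 1 / exp (p * Re z) ^ 4"
    using norm_one_plus(2)[OF Re4[OF assms]] by (intro divide_left_mono) (auto simp: norm_power norm_ee intro!: mult_pos_pos)
  also have "\<dots> = exp (- 4 * p * Re z)"
    by (simp add: exp_of_nat_mult[symmetric] exp_minus field_simps)
  finally show ?thesis .
qed

end


lemma geo_lim: "c > 0 \<Longrightarrow> (\<lambda>m::nat. exp (b - c * real m)) \<longlonglongrightarrow> 0"
proof -
  assume c: "c > 0"
  have e: "exp (b - c * real m) = exp b * exp (- c) ^ m" for m
    by (simp add: exp_diff exp_minus exp_of_nat_mult[symmetric] field_simps)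
  have "(\<lambda>m. exp b * exp (- c) ^ m) \<longlonglongrightarrow> exp b * 0"
    using c by (intro tendsto_intros) simp
  then show ?thesis by (simp add: e)
qed

lemma geo_summ: "c > 0 \<Longrightarrow> summable (\<lambda>m::nat. K * exp (- c * real m))"
proof -
  assume c: "c > 0"
  have e: "exp (- c * real m) = exp (- c) ^ m" for m
    by (simp add: exp_of_nat_mult[symmetric] mult.commute)
  show ?thesis unfolding e using c by (intro summable_mult summable_geometric) simp
qed

lemma exp_shift_le: assumes "p > 0" "\<bar>y\<bar> \<ge> real n - \<bar>x\<bar>"
  shows "K \<ge> 0 \<Longrightarrow> K * exp (- p * \<bar>y\<bar>) \<le> (K * exp (p * \<bar>x\<bar>)) * exp (- p * real n)"
proof -
  assume K: "K \<ge> 0"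
  have "- p * \<bar>y\<bar> \<le> p * \<bar>x\<bar> + - p * real n"
    using assms mult_left_mono[OF assms(2), of p] by (simp add: algebra_simps)
  then have "exp (- p * \<bar>y\<bar>) \<le> exp (p * \<bar>x\<bar>) * exp (- p * real n)"
    by (simp add: exp_add[symmetric])
  then show ?thesis using K by (simp add: mult.assoc mult_left_mono)
qed

context
  fixes p \<theta> :: real
  assumes p: "p > 0" and pt: "4 * p * \<theta> \<le> pi / 2"
begin

lemma gg_holo: "gg p holomorphic_on strip \<theta>"
  unfolding gg_def[abs_def] ee_def[abs_def]
  by (intro holomorphic_intros) (use nz[OF p pt] strip_Im in \<open>auto simp: ee_def\<close>)

lemma hh_holo: "hh p holomorphic_on strip \<theta>"
  unfolding hh_def[abs_def] ee_def[abs_def]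
  by (intro holomorphic_intros) (use nz[OF p pt] strip_Im in \<open>auto simp: ee_def\<close>)

lemma K_nonneg: "4 / cc p \<ge> 0" using cc_pos[of p] by simp

lemma part1: assumes z: "\<bar>Im z\<bar> < \<theta>"
  shows "((\<lambda>n::nat. ff p (z - of_nat n)) has_sum FF p z) UNIV"
proof (rule norm_summable_imp_has_sum)
  define K where "K = 4 / cc p * exp (p * \<bar>Re z\<bar>)"
  show "summable (\<lambda>n. norm (ff p (z - of_nat n)))"
  proof (rule summable_comparison_test'[OF geo_summ[OF p, of K]])
    fix n :: nat
    have "norm (ff p (z - of_nat n)) \<le> 4 / cc p * exp (- p * \<bar>Re (z - of_nat n)\<bar>)"
      using ff_bound[OF p pt, of "z - of_nat n"] z by simp
    also have "\<dots> \<le> K * exp (- p * real n)"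
      unfolding K_def using K_nonneg by (intro exp_shift_le p) auto
    finally show "norm (norm (ff p (z - of_nat n))) \<le> K * exp (- p * real n)" by simp
  qed
  define G where "G n = FF p (z - of_nat n)" for n :: nat
  have t: "ff p (z - of_nat n) = G n - G (Suc n)" for n
    unfolding G_def using tele[OF p pt, of "z - of_nat n"] z by (simp add: algebra_simps)
  have "(\<lambda>m. G m) \<longlonglongrightarrow> 0"
  proof (rule Lim_null_comparison[OF _ geo_lim[of "4*p" "4 * p * Re z"]])
    show "\<forall>\<^sub>F m in sequentially. norm (G m) \<le> exp (4 * p * Re z - 4 * p * real m)"
      using FF_bound0[OF p pt, of "z - of_nat _"] z unfolding G_def
      by (auto simp: algebra_simps)
  qed (use p in simp)
  then have "(\<lambda>m. G 0 - G m) \<longlonglongrightarrow> G 0 - 0" by (intro tendsto_intros)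
  then show "(\<lambda>n. ff p (z - of_nat n)) sums FF p z"
    unfolding sums_def t sum_lessThan_telescope' by (simp add: G_def)
qed

lemma part2: assumes z: "\<bar>Im z\<bar> < \<theta>"
  shows "((\<lambda>n::nat. ff p (z + of_nat n + 1)) has_sum (1 - FF p z)) UNIV"
proof (rule norm_summable_imp_has_sum)
  define K where "K = 4 / cc p * exp (p * \<bar>Re z\<bar>)"
  show "summable (\<lambda>n. norm (ff p (z + of_nat n + 1)))"
  proof (rule summable_comparison_test'[OF geo_summ[OF p, of K]])
    fix n :: nat
    have "norm (ff p (z + of_nat n + 1)) \<le> 4 / cc p * exp (- p * \<bar>Re (z + of_nat n + 1)\<bar>)"
      using ff_bound[OF p pt, of "z + of_nat n + 1"] z by simp
    also have "\<dots> \<le> K * exp (- p * real n)"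
      unfolding K_def using K_nonneg by (intro exp_shift_le p) auto
    finally show "norm (norm (ff p (z + of_nat n + 1))) \<le> K * exp (- p * real n)" by simp
  qed
  define H where "H n = FF p (z + of_nat n)" for n :: nat
  have t: "ff p (z + of_nat n + 1) = H (Suc n) - H n" for n
    unfolding H_def using tele[OF p pt, of "z + of_nat n + 1"] z by (simp add: algebra_simps)
  have "(\<lambda>m. H m - 1) \<longlonglongrightarrow> 0"
  proof (rule Lim_null_comparison[OF _ geo_lim[of "4*p" "- 4 * p * Re z"]])
    show "\<forall>\<^sub>F m in sequentially. norm (H m - 1) \<le> exp (- 4 * p * Re z - 4 * p * real m)"
      using FF_bound1[OF p pt, of "z + of_nat _"] z unfolding H_def
      by (auto simp: algebra_simps)
  qed (use p in simp)
  then have "(\<lambda>m. (H m - 1) + (1 - H 0)) \<longlonglongrightarrow> 0 + (1 - H 0)" by (intro tendsto_intros)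
  then show "(\<lambda>n. ff p (z + of_nat n + 1)) sums (1 - FF p z)"
    unfolding sums_def t sum_lessThan_telescope by (simp add: H_def)
qed

lemma full_sum: assumes z: "\<bar>Im z\<bar> < \<theta>"
  shows "((\<lambda>n::int. ff p (z - of_int n)) has_sum 1) UNIV"
proof -
  let ?f = "\<lambda>n::int. ff p (z - of_int n)"
  have A: "(?f has_sum FF p z) (range int)"
    by (subst has_sum_reindex) (use part1[OF z] in \<open>auto simp: o_def inj_on_def\<close>)
  have B: "(?f has_sum (1 - FF p z)) (range (\<lambda>n::nat. - int n - 1))"
    by (subst has_sum_reindex) (use part2[OF z] in \<open>auto simp: o_def inj_on_def algebra_simps\<close>)
  have U: "range int \<union> range (\<lambda>n::nat. - int n - 1) = UNIV"
  proof -
    have "k \<in> range int \<union> range (\<lambda>n::nat. - int n - 1)" for k :: int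
    proof (cases "k \<ge> 0")
      case True then have "k = int (nat k)" by simp
      then show ?thesis by blast
    next
      case False then have "k = - int (nat (- k - 1)) - 1" by simp
      then show ?thesis by blast
    qed
    then show ?thesis by blast
  qed
  have "(?f has_sum (FF p z + (1 - FF p z))) (range int \<union> range (\<lambda>n::nat. - int n - 1))"
    by (rule has_sum_Un_disjoint[OF A B]) auto
  then show ?thesis unfolding U by simp
qed

end

theorem lemma8p6:
  fixes \<theta> :: real
  assumes "\<theta> > 0"
  shows "\<exists>\<psi> \<psi>\<^sub>1 \<psi>\<^sub>2. \<psi> \<in> Hinf0 \<theta> \<and> \<psi>\<^sub>1 \<in> Hinf0 \<theta> \<and> \<psi>\<^sub>2 \<in> Hinf0 \<theta> \<and>
     (\<forall>z\<in>strip \<theta>.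
        ((\<lambda>n::int. \<psi>\<^sub>1 (z - of_int n) * \<psi>\<^sub>2 (z - of_int n) * \<psi> (z - of_int n)) has_sum 1) UNIV)"
proof -
  define p where "p = pi / (8 * \<theta>)"
  have p: "p > 0" using assms by (simp add: p_def)
  have pt: "4 * p * \<theta> \<le> pi / 2" using assms by (simp add: p_def field_simps)
  have G: "gg p \<in> Hinf0 \<theta>"
    by (rule Hinf0I[OF gg_holo[OF p pt] p, of 1]) (use gg_bound[OF p pt] strip_Im in auto)
  have H: "hh p \<in> Hinf0 \<theta>"
    by (rule Hinf0I[OF hh_holo[OF p pt] p K_nonneg[OF p pt]]) (use hh_bound[OF p pt] strip_Im in auto)
  have S: "((\<lambda>n::int. gg p (z - of_int n) * gg p (z - of_int n) * hh p (z - of_int n)) has_sum 1) UNIV"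
    if z: "z \<in> strip \<theta>" for z
  proof -
    have zi: "\<bar>Im z\<bar> < \<theta>" using strip_Im[OF z] .
    have "((\<lambda>n::int. ff p (z - of_int n)) has_sum 1) UNIV" by (rule full_sum[OF p pt zi])
    moreover have "gg p (z - of_int n) * gg p (z - of_int n) * hh p (z - of_int n) = ff p (z - of_int n)" for n
      by (rule prod_eq[OF p pt]) (use zi in simp)
    ultimately show ?thesis by simp
  qed
  show ?thesis using G H S by blast
qed

end
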